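(* Let $(A,\mathfrak{m}_A)$ be a local homologically bounded DG algebra with $A\not\simeq 0$, $\mathfrak{m}_A=A_+$, and $s=\operatorname{amp}(H(A))$. Let $K$ be a homologically finite DG $A$-module with $\operatorname{amp}(H(K))\leq s$, let $r\geq\sup(H(K))$ be an integer, and let $K'=\operatorname{Syz}_r(K)$. Then $\sup(H(K'))\leq s+r$ and $\inf(H(K'))\geq r$. Therefore $\operatorname{amp}(H(K'))\leq s$.
   Context: Complexes are indexed homologically; $\sup,\inf$ are the largest/smallest degrees of nonzero components and $\operatorname{amp}=\sup-\inf$, applied to homology. A DG algebra is a complex with unital, associative, graded-commutative chain map multiplication; positively graded means $A_i=0$ for $i<0$. A positively graded DG algebra is local if $H_0(A)$ is a noetherian local ring and each $H_i(A)$ is finitely generated over $H_0(A)$; here its maximal ideal $\mathfrak{m}_A$ is $A_+=\bigoplus_{i\ge1}A_i$. $A\not\simeq0$ means $H(A)\neq0$. A DG $A$-module is homologically finite if $H(K)$ is finitely generated over $H_0(A)$. Semifree: underlying graded module free over $A^\natural$ (and bounded below), semibasis = homogeneous basis. Syzygy construction: take a minimal semifree resolution $F\xrightarrow{\simeq}K$ (semibasis finite in each degree, $\partial^F(F)\subseteq\mathfrak{m}_AF$); let $\widetilde K=\tau_{\le r}(F)$ be the soft truncation ($\cdots\to0\to F_r/\operatorname{Im}\partial_{r+1}\to F_{r-1}\to\cdots$), $L$ the semifree submodule of $F$ spanned by semibasis elements of degree $\le r$, $\pi\colon L\to\widetilde K$ the composite of inclusion and the natural surjection; then $\operatorname{Syz}_r(K)=\ker\pi$.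 *)

theory Defs
  imports Main "HOL-Algebra.QuotRing" "HOL-Algebra.Ring_Divisibility"
begin

text \<open>A graded object is an ambient type together with its homogeneous components
  (an int-indexed family of sets), whose sum is direct.\<close>

definition sgnpow :: "int \<Rightarrow> 'a::ring_1" where
  "sgnpow i = (if even i then 1 else - 1)"

definition graded_group :: "(int \<Rightarrow> 'm::ab_group_add set) \<Rightarrow> bool" where
  "graded_group C \<longleftrightarrow>
     (\<forall>i. 0 \<in> C i \<and> (\<forall>x\<in>C i. \<forall>y\<in>C i. x + y \<in> C i \<and> - x \<in> C i)) \<and>
     (\<forall>(I::int set) f. finite I \<longrightarrow> (\<forall>i\<in>I. f i \<in> C i) \<longrightarrow> sum f I = 0 \<longrightarrow> (\<forall>i\<in>I. f i = 0))"

definition differential :: "(int \<Rightarrow> 'm::ab_group_add set) \<Rightarrow> ('m \<Rightarrow> 'm) \<Rightarrow> bool" where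
  "differential C d \<longleftrightarrow>
     (\<forall>i. \<forall>x\<in>C i. d x \<in> C (i - 1)) \<and>
     (\<forall>i. \<forall>x\<in>C i. \<forall>y\<in>C i. d (x + y) = d x + d y) \<and>
     (\<forall>i. \<forall>x\<in>C i. d (d x) = 0)"

definition cycles :: "(int \<Rightarrow> 'm::zero set) \<Rightarrow> ('m \<Rightarrow> 'm) \<Rightarrow> int \<Rightarrow> 'm set" where
  "cycles C d i = {x \<in> C i. d x = 0}"

definition boundaries :: "(int \<Rightarrow> 'm set) \<Rightarrow> ('m \<Rightarrow> 'm) \<Rightarrow> int \<Rightarrow> 'm set" where
  "boundaries C d i = d ` C (i + 1)"

definition homology_nonzero :: "(int \<Rightarrow> 'm::zero set) \<Rightarrow> ('m \<Rightarrow> 'm) \<Rightarrow> int \<Rightarrow> bool" where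
  "homology_nonzero C d i \<longleftrightarrow> \<not> cycles C d i \<subseteq> boundaries C d i"

text \<open>The set of degrees in which the homology is nonzero; \<open>sup\<close>, \<open>inf\<close>, \<open>amp\<close>
  of \<open>H\<close> are the max, min and their difference of this set.\<close>

definition hom_degrees :: "(int \<Rightarrow> 'm::zero set) \<Rightarrow> ('m \<Rightarrow> 'm) \<Rightarrow> int set" where
  "hom_degrees C d = {i. homology_nonzero C d i}"

definition dg_algebra :: "(int \<Rightarrow> 'a::ring_1 set) \<Rightarrow> ('a \<Rightarrow> 'a) \<Rightarrow> bool" where
  "dg_algebra A d \<longleftrightarrow>
     graded_group A \<and> differential A d \<and>
     1 \<in> A 0 \<and>
     (\<forall>i j. \<forall>a\<in>A i. \<forall>b\<in>A j. a * b \<in> A (i + j)) \<and>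
     (\<forall>i j. \<forall>a\<in>A i. \<forall>b\<in>A j. d (a * b) = d a * b + sgnpow i * (a * d b)) \<and>
     (\<forall>i j. \<forall>a\<in>A i. \<forall>b\<in>A j. a * b = sgnpow (i * j) * (b * a))"

definition positively_graded :: "(int \<Rightarrow> 'a::zero set) \<Rightarrow> bool" where
  "positively_graded A \<longleftrightarrow> (\<forall>i < 0. A i = {0})"

text \<open>The ring \<open>A_0\<close> (as a HOL-Algebra ring record) and \<open>H_0(A) = A_0 / \<partial>(A_1)\<close>
  (for positively graded \<open>A\<close> every element of \<open>A_0\<close> is a cycle).\<close>

definition deg0_ring :: "(int \<Rightarrow> 'a::ring_1 set) \<Rightarrow> 'a ring" where
  "deg0_ring A = \<lparr>carrier = A 0, monoid.mult = (*), one = 1, zero = 0, add = (+)\<rparr>"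

definition H0_ring :: "(int \<Rightarrow> 'a::ring_1 set) \<Rightarrow> ('a \<Rightarrow> 'a) \<Rightarrow> 'a set ring" where
  "H0_ring A d = deg0_ring A Quot (d ` A 1)"

definition local_noetherian_ring :: "('b, 'c) ring_scheme \<Rightarrow> bool" where
  "local_noetherian_ring R \<longleftrightarrow> cring R \<and> noetherian_ring R \<and> (\<exists>!M. maximalideal M R)"

definition dg_module ::
  "(int \<Rightarrow> 'a::ring_1 set) \<Rightarrow> ('a \<Rightarrow> 'a) \<Rightarrow> (int \<Rightarrow> 'm::ab_group_add set) \<Rightarrow> ('m \<Rightarrow> 'm)
     \<Rightarrow> ('a \<Rightarrow> 'm \<Rightarrow> 'm) \<Rightarrow> bool" where
  "dg_module A d M dM sm \<longleftrightarrow>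
     graded_group M \<and> differential M dM \<and>
     (\<forall>i j. \<forall>a\<in>A i. \<forall>x\<in>M j. sm a x \<in> M (i + j)) \<and>
     (\<forall>i j. \<forall>a\<in>A i. \<forall>b\<in>A i. \<forall>x\<in>M j. sm (a + b) x = sm a x + sm b x) \<and>
     (\<forall>i j. \<forall>a\<in>A i. \<forall>x\<in>M j. \<forall>y\<in>M j. sm a (x + y) = sm a x + sm a y) \<and>
     (\<forall>i j k. \<forall>a\<in>A i. \<forall>b\<in>A j. \<forall>x\<in>M k. sm (a * b) x = sm a (sm b x)) \<and>
     (\<forall>j. \<forall>x\<in>M j. sm 1 x = x) \<and>
     (\<forall>i j. \<forall>a\<in>A i. \<forall>x\<in>M j. dM (sm a x) = sm (d a) x + (if even i then sm a (dM x) else - sm a (dM x)))"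

text \<open>\<open>H_i(M)\<close> is finitely generated over \<open>H_0(A)\<close>: finitely many cycles whose
  \<open>A_0\<close>-linear combinations represent every homology class.\<close>

definition hom_fg ::
  "(int \<Rightarrow> 'a set) \<Rightarrow> (int \<Rightarrow> 'm::{ab_group_add} set) \<Rightarrow> ('m \<Rightarrow> 'm) \<Rightarrow> ('a \<Rightarrow> 'm \<Rightarrow> 'm) \<Rightarrow> int \<Rightarrow> bool" where
  "hom_fg A M dM sm i \<longleftrightarrow>
     (\<exists>G. finite G \<and> G \<subseteq> cycles M dM i \<and>
        (\<forall>z\<in>cycles M dM i. \<exists>c. (\<forall>g\<in>G. c g \<in> A 0) \<and>
            z - (\<Sum>g\<in>G. sm (c g) g) \<in> boundaries M dM i))"

definition local_dg_algebra :: "(int \<Rightarrow> 'a::ring_1 set) \<Rightarrow> ('a \<Rightarrow> 'a) \<Rightarrow> bool" where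
  "local_dg_algebra A d \<longleftrightarrow>
     dg_algebra A d \<and> positively_graded A \<and> local_noetherian_ring (H0_ring A d) \<and>
     (\<forall>i. hom_fg A A d (*) i)"

text \<open>Homologically finite: \<open>H(M)\<close> finitely generated over \<open>H_0(A)\<close>; since
  \<open>H_0(A)\<close> sits in degree 0, this means only finitely many \<open>H_i(M)\<close> are nonzero and
  each is finitely generated.\<close>

definition homologically_finite ::
  "(int \<Rightarrow> 'a set) \<Rightarrow> (int \<Rightarrow> 'm::ab_group_add set) \<Rightarrow> ('m \<Rightarrow> 'm) \<Rightarrow> ('a \<Rightarrow> 'm \<Rightarrow> 'm) \<Rightarrow> bool" where
  "homologically_finite A M dM sm \<longleftrightarrow> finite (hom_degrees M dM) \<and> (\<forall>i. hom_fg A M dM sm i)"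

definition quasi_iso ::
  "(int \<Rightarrow> 'a set) \<Rightarrow> (int \<Rightarrow> 'f::ab_group_add set) \<Rightarrow> ('f \<Rightarrow> 'f) \<Rightarrow> ('a \<Rightarrow> 'f \<Rightarrow> 'f)
    \<Rightarrow> (int \<Rightarrow> 'm::ab_group_add set) \<Rightarrow> ('m \<Rightarrow> 'm) \<Rightarrow> ('a \<Rightarrow> 'm \<Rightarrow> 'm) \<Rightarrow> ('f \<Rightarrow> 'm) \<Rightarrow> bool" where
  "quasi_iso A F dF smF M dM smM \<phi> \<longleftrightarrow>
     (\<forall>i. \<forall>x\<in>F i. \<phi> x \<in> M i) \<and>
     (\<forall>i. \<forall>x\<in>F i. \<forall>y\<in>F i. \<phi> (x + y) = \<phi> x + \<phi> y) \<and>
     (\<forall>i j. \<forall>a\<in>A i. \<forall>x\<in>F j. \<phi> (smF a x) = smM a (\<phi> x)) \<and>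
     (\<forall>i. \<forall>x\<in>F i. \<phi> (dF x) = dM (\<phi> x)) \<and>
     (\<forall>i. \<forall>x\<in>cycles F dF i. \<phi> x \<in> boundaries M dM i \<longrightarrow> x \<in> boundaries F dF i) \<and>
     (\<forall>i. \<forall>y\<in>cycles M dM i. \<exists>x\<in>cycles F dF i. \<phi> x - y \<in> boundaries M dM i)"

text \<open>\<open>E\<close> with degree function \<open>dg\<close> is a semibasis of \<open>F\<close>: the underlying graded
  module of \<open>F\<close> is free over \<open>A^\<natural>\<close> on the homogeneous basis \<open>E\<close>.\<close>

definition semibasis ::
  "(int \<Rightarrow> 'a::zero set) \<Rightarrow> (int \<Rightarrow> 'f::ab_group_add set) \<Rightarrow> ('a \<Rightarrow> 'f \<Rightarrow> 'f) \<Rightarrow> 'f set \<Rightarrow> ('f \<Rightarrow> int) \<Rightarrow> bool" where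
  "semibasis A F sm E dg \<longleftrightarrow>
     (\<forall>e\<in>E. e \<in> F (dg e)) \<and>
     (\<forall>n. \<forall>x\<in>F n. \<exists>!c. (\<forall>e. c e \<in> A (n - dg e)) \<and> (\<forall>e. e \<notin> E \<longrightarrow> c e = 0) \<and>
           finite {e. c e \<noteq> 0} \<and> x = (\<Sum>e\<in>{e. c e \<noteq> 0}. sm (c e) e))"

definition minimal_semifree ::
  "(int \<Rightarrow> 'a::zero set) \<Rightarrow> (int \<Rightarrow> 'f::ab_group_add set) \<Rightarrow> ('f \<Rightarrow> 'f) \<Rightarrow> ('a \<Rightarrow> 'f \<Rightarrow> 'f)
     \<Rightarrow> 'f set \<Rightarrow> ('f \<Rightarrow> int) \<Rightarrow> bool" where
  "minimal_semifree A F dF sm E dg \<longleftrightarrow>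
     semibasis A F sm E dg \<and>
     (\<exists>b. \<forall>e\<in>E. b \<le> dg e) \<and>
     (\<forall>n. finite {e\<in>E. dg e = n}) \<and>
     \<comment> \<open>minimality: \<open>\<partial>(F) \<subseteq> \<frak>m_A F\<close> with \<open>\<frak>m_A = A_+\<close>\<close>
     (\<forall>n. \<forall>x\<in>F n. \<exists>(S::nat set) a k y. finite S \<and>
         (\<forall>j\<in>S. 1 \<le> k j \<and> a j \<in> A (k j) \<and> y j \<in> F (n - 1 - k j)) \<and>
         dF x = (\<Sum>j\<in>S. sm (a j) (y j)))"

text \<open>\<open>L\<close>: the semifree submodule of \<open>F\<close> spanned by the semibasis elements of degree \<open>\<le> r\<close>.\<close>

definition low_part ::
  "(int \<Rightarrow> 'a set) \<Rightarrow> ('a \<Rightarrow> 'f::ab_group_add \<Rightarrow> 'f) \<Rightarrow> 'f set \<Rightarrow> ('f \<Rightarrow> int) \<Rightarrow> int \<Rightarrow> int \<Rightarrow> 'f set" where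
  "low_part A sm E dg r n =
     {\<Sum>e\<in>S. sm (c e) e | S c. finite S \<and> S \<subseteq> {e\<in>E. dg e \<le> r} \<and> (\<forall>e\<in>S. c e \<in> A (n - dg e))}"

text \<open>\<open>\<pi> : L \<rightarrow> \<tau>_{\<le> r}(F)\<close> is zero in degrees \<open>> r\<close>, the projection
  \<open>F_r \<rightarrow> F_r / \<partial>(F_{r+1})\<close> in degree \<open>r\<close> and the identity in degrees \<open>< r\<close>.
  Hence \<open>x \<in> L_n\<close> lies in \<open>ker \<pi>\<close> iff the following holds.\<close>

definition trunc_proj_zero :: "(int \<Rightarrow> 'f::zero set) \<Rightarrow> ('f \<Rightarrow> 'f) \<Rightarrow> int \<Rightarrow> int \<Rightarrow> 'f \<Rightarrow> bool" where
  "trunc_proj_zero F dF r n x \<longleftrightarrow>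
     (if n > r then True else if n = r then x \<in> dF ` F (r + 1) else x = 0)"

definition syzygy ::
  "(int \<Rightarrow> 'a set) \<Rightarrow> (int \<Rightarrow> 'f::ab_group_add set) \<Rightarrow> ('f \<Rightarrow> 'f) \<Rightarrow> ('a \<Rightarrow> 'f \<Rightarrow> 'f)
     \<Rightarrow> 'f set \<Rightarrow> ('f \<Rightarrow> int) \<Rightarrow> int \<Rightarrow> int \<Rightarrow> 'f set" where
  "syzygy A F dF sm E dg r n = {x \<in> low_part A sm E dg r n. trunc_proj_zero F dF r n x}"

end

theory Submission
  imports Defs
begin


lemma H0_nonzero:
  fixes A :: "int \<Rightarrow> 'a::ring_1 set"
  assumes "dg_algebra A d" "positively_graded A" "local_noetherian_ring (H0_ring A d)"
  shows "0 \<in> hom_degrees A d"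
proof (rule ccontr)
  assume na: "0 \<notin> hom_degrees A d"
  have gg: "\<forall>i. 0 \<in> A i \<and> (\<forall>x\<in>A i. \<forall>y\<in>A i. x + y \<in> A i \<and> - x \<in> A i)"
    using assms(1) unfolding dg_algebra_def graded_group_def by blast
  have dgen: "\<forall>i. \<forall>x\<in>A i. d x \<in> A (i - 1)" using assms(1) unfolding dg_algebra_def differential_def
    by blast
  have dd: "\<forall>x\<in>A 1. d x \<in> A 0" using spec[OF dgen, of 1] by simp
  have dneg: "\<forall>x\<in>A 0. d x \<in> A (-1)" using spec[OF dgen, of 0] by simp
  have Am: "A (-1) = {0}" using assms(2) unfolding positively_graded_def by simp
  have cyc: "cycles A d 0 = A 0" using dneg Am unfolding cycles_def by auto
  let ?I = "d ` A 1"
  have IA: "?I = A 0" using na cyc dd unfolding hom_degrees_def homology_nonzero_def boundaries_def by auto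
  have coset: "\<And>a. a \<in> A 0 \<Longrightarrow> ?I +>\<^bsub>deg0_ring A\<^esub> a = A 0"
  proof -
    fix a assume a: "a \<in> A 0"
    show "?I +>\<^bsub>deg0_ring A\<^esub> a = A 0"
    proof
      show "?I +>\<^bsub>deg0_ring A\<^esub> a \<subseteq> A 0"
        unfolding a_r_coset_def' using IA a gg by (auto simp: deg0_ring_def)
      show "A 0 \<subseteq> ?I +>\<^bsub>deg0_ring A\<^esub> a"
      proof
        fix x assume x: "x \<in> A 0"
        have "x - a \<in> A 0" using gg x a by (metis diff_conv_add_uminus)
        then show "x \<in> ?I +>\<^bsub>deg0_ring A\<^esub> a"
          unfolding a_r_coset_def' using IA by (auto simp: deg0_ring_def intro!: bexI[of _ "x - a"])
      qed
    qed
  qed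
  have carr: "carrier (H0_ring A d) = {A 0}"
    unfolding H0_ring_def FactRing_def A_RCOSETS_def' using coset gg
    by (auto simp: deg0_ring_def)
  have z: "\<zero>\<^bsub>H0_ring A d\<^esub> = A 0" unfolding H0_ring_def FactRing_def using IA by simp
  obtain M where M: "maximalideal M (H0_ring A d)" using assms(3) unfolding local_noetherian_ring_def by blast
  have "M \<subseteq> carrier (H0_ring A d)" "\<zero>\<^bsub>H0_ring A d\<^esub> \<in> M"
    using M unfolding maximalideal_def ideal_def
    by (auto dest: additive_subgroup.a_subset additive_subgroup.zero_closed)
  then have "M = carrier (H0_ring A d)" using carr z by auto
  then show False using M maximalideal.I_notcarr by metis
qed



locale sfm =
  fixes A :: "int \<Rightarrow> 'a::ring_1 set" and d :: "'a \<Rightarrow> 'a"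
    and F :: "int \<Rightarrow> 'f::ab_group_add set" and dF :: "'f \<Rightarrow> 'f" and sm :: "'a \<Rightarrow> 'f \<Rightarrow> 'f"
    and E :: "'f set" and dg :: "'f \<Rightarrow> int"
  assumes dga: "dg_algebra A d" and pos: "positively_graded A"
    and modl: "dg_module A d F dF sm" and sb: "semibasis A F sm E dg"
begin

lemma dgaF:
  "\<forall>i. 0 \<in> A i \<and> (\<forall>x\<in>A i. \<forall>y\<in>A i. x + y \<in> A i \<and> - x \<in> A i)"
  "1 \<in> A 0"
  "\<forall>i j. \<forall>a\<in>A i. \<forall>b\<in>A j. a * b \<in> A (i + j)"
  "\<forall>i. \<forall>x\<in>A i. d x \<in> A (i - 1)"
  "\<forall>i. \<forall>x\<in>A i. \<forall>y\<in>A i. d (x + y) = d x + d y"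
  apply (insert dga) apply (unfold dg_algebra_def graded_group_def differential_def)
  apply (elim conjE, assumption)+ done
lemma modF:
  "\<forall>i. 0 \<in> F i \<and> (\<forall>x\<in>F i. \<forall>y\<in>F i. x + y \<in> F i \<and> - x \<in> F i)"
  "\<forall>i. \<forall>x\<in>F i. dF x \<in> F (i - 1)"
  "\<forall>i. \<forall>x\<in>F i. \<forall>y\<in>F i. dF (x + y) = dF x + dF y"
  "\<forall>i. \<forall>x\<in>F i. dF (dF x) = 0"
  "\<forall>i j. \<forall>a\<in>A i. \<forall>x\<in>F j. sm a x \<in> F (i + j)"
  "\<forall>i j. \<forall>a\<in>A i. \<forall>b\<in>A i. \<forall>x\<in>F j. sm (a + b) x = sm a x + sm b x"
  "\<forall>i j. \<forall>a\<in>A i. \<forall>x\<in>F j. \<forall>y\<in>F j. sm a (x + y) = sm a x + sm a y"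
  "\<forall>i j k. \<forall>a\<in>A i. \<forall>b\<in>A j. \<forall>x\<in>F k. sm (a * b) x = sm a (sm b x)"
  "\<forall>j. \<forall>x\<in>F j. sm 1 x = x"
  "\<forall>i j. \<forall>a\<in>A i. \<forall>x\<in>F j. dF (sm a x) = sm (d a) x + (if even i then sm a (dF x) else - sm a (dF x))"
  apply (insert modl) apply (unfold dg_module_def graded_group_def differential_def)
  apply (elim conjE, assumption)+ done

lemma A0: "0 \<in> A i" using dgaF(1) by blast
lemma A_add: "a \<in> A i \<Longrightarrow> b \<in> A i \<Longrightarrow> a + b \<in> A i"
  using dgaF(1) by blast
lemma A_mul: "a \<in> A i \<Longrightarrow> b \<in> A j \<Longrightarrow> k = i + j \<Longrightarrow> a * b \<in> A k"
  using dgaF(3) by blast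
lemma A1: "1 \<in> A 0" using dgaF(2) .
lemma d_deg: "a \<in> A i \<Longrightarrow> k = i - 1 \<Longrightarrow> d a \<in> A k"
  using dgaF(4) by blast
lemma d_add: "a \<in> A i \<Longrightarrow> b \<in> A i \<Longrightarrow> d (a + b) = d a + d b"
  using dgaF(5) by blast
lemma d0: "d 0 = 0" using d_add[of 0 0 0, OF A0 A0] by simp
lemma A_neg_deg: "i < 0 \<Longrightarrow> a \<in> A i \<Longrightarrow> a = 0"
  using pos unfolding positively_graded_def by blast

lemma F0: "0 \<in> F i" using modF(1) by blast
lemma F_add: "x \<in> F i \<Longrightarrow> y \<in> F i \<Longrightarrow> x + y \<in> F i"
  using modF(1) by blast
lemma F_uminus: "x \<in> F i \<Longrightarrow> - x \<in> F i"
  using modF(1) by blast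
lemma F_diff: "x \<in> F i \<Longrightarrow> y \<in> F i \<Longrightarrow> x - y \<in> F i"
  using F_add F_uminus by (metis diff_conv_add_uminus)
lemma dF_deg: "x \<in> F i \<Longrightarrow> k = i - 1 \<Longrightarrow> dF x \<in> F k"
  using modF(2) by blast
lemma dF_add: "x \<in> F i \<Longrightarrow> y \<in> F i \<Longrightarrow> dF (x + y) = dF x + dF y"
  using modF(3) by blast
lemma dFdF: "x \<in> F i \<Longrightarrow> dF (dF x) = 0"
  using modF(4) by blast
lemma dF0: "dF 0 = 0" using dF_add[of 0 0 0, OF F0 F0] by simp
lemma dF_uminus: "x \<in> F i \<Longrightarrow> dF (- x) = - dF x"
  using dF_add[of x i "- x"] F_uminus dF0 minus_unique[of "dF x" "dF (- x)"] by simp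
lemma dF_diff: "x \<in> F i \<Longrightarrow> y \<in> F i \<Longrightarrow> dF (x - y) = dF x - dF y"
  using dF_add[of x i "- y"] F_uminus dF_uminus by simp
lemma sm_deg: "a \<in> A i \<Longrightarrow> x \<in> F j \<Longrightarrow> k = i + j \<Longrightarrow> sm a x \<in> F k"
  using modF(5) by blast
lemma sm_addl: "a \<in> A i \<Longrightarrow> b \<in> A i \<Longrightarrow> x \<in> F j \<Longrightarrow> sm (a + b) x = sm a x + sm b x"
  using modF(6) by blast
lemma sm_addr: "a \<in> A i \<Longrightarrow> x \<in> F j \<Longrightarrow> y \<in> F j \<Longrightarrow> sm a (x + y) = sm a x + sm a y"
  using modF(7) by blast
lemma sm_assoc: "a \<in> A i \<Longrightarrow> b \<in> A j \<Longrightarrow> x \<in> F k \<Longrightarrow> sm (a * b) x = sm a (sm b x)"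
  using modF(8) by blast
lemma sm_one: "x \<in> F j \<Longrightarrow> sm 1 x = x"
  using modF(9) by blast
lemma leib: "a \<in> A i \<Longrightarrow> x \<in> F j \<Longrightarrow>
   dF (sm a x) = sm (d a) x + (if even i then sm a (dF x) else - sm a (dF x))"
  using modF(10) by blast
lemma sm_zero_l: "x \<in> F j \<Longrightarrow> sm 0 x = 0"
  using sm_addl[of 0 0 0 x j, OF A0 A0] by simp
lemma sm_zero_r: "a \<in> A i \<Longrightarrow> sm a 0 = 0"
  using sm_addr[of a i 0 0 0] F0 by simp
lemma basis_in: "e \<in> E \<Longrightarrow> e \<in> F (dg e)"
  using sb unfolding semibasis_def by blast
lemma sm_addlE: "a \<in> A i \<Longrightarrow> b \<in> A i \<Longrightarrow> e \<in> E \<Longrightarrow> sm (a + b) e = sm a e + sm b e"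
  using sm_addl basis_in by blast
lemma sm_assocE: "a \<in> A i \<Longrightarrow> b \<in> A j \<Longrightarrow> e \<in> E \<Longrightarrow> sm (a * b) e = sm a (sm b e)"
  using sm_assoc basis_in by blast
lemma sm0E: "e \<in> E \<Longrightarrow> sm 0 e = 0"
  using sm_zero_l basis_in by blast

lemma F_sum: "finite S \<Longrightarrow> (\<And>s. s \<in> S \<Longrightarrow> g s \<in> F n) \<Longrightarrow> sum g S \<in> F n"
  by (induction S rule: finite_induct) (auto intro: F0 F_add)
lemma dF_sum: "finite S \<Longrightarrow> (\<And>s. s \<in> S \<Longrightarrow> g s \<in> F n) \<Longrightarrow> dF (sum g S) = (\<Sum>s\<in>S. dF (g s))"
proof (induction S rule: finite_induct)
  case empty then show ?case by (simp add: dF0)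
next
  case (insert x S)
  then show ?case by (simp add: dF_add[OF _ F_sum, of _ n])
qed
lemma sm_sum: "finite S \<Longrightarrow> a \<in> A i \<Longrightarrow> (\<And>s. s \<in> S \<Longrightarrow> g s \<in> F n) \<Longrightarrow> sm a (sum g S) = (\<Sum>s\<in>S. sm a (g s))"
proof (induction S rule: finite_induct)
  case empty then show ?case by (simp add: sm_zero_r)
next
  case (insert x S)
  then show ?case by (simp add: sm_addr[OF _ _ F_sum, of a i _ n])
qed

definition rep where
  "rep n x c \<longleftrightarrow> (\<forall>e. c e \<in> A (n - dg e)) \<and> (\<forall>e. e \<notin> E \<longrightarrow> c e = 0) \<and>
           finite {e. c e \<noteq> 0} \<and> x = (\<Sum>e\<in>{e. c e \<noteq> 0}. sm (c e) e)"
definition cf where "cf n x = (THE c. rep n x c)"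

lemma ex1: "x \<in> F n \<Longrightarrow> \<exists>!c. rep n x c"
  using sb unfolding semibasis_def rep_def by blast
lemma cf_rep: assumes "x \<in> F n" shows "rep n x (cf n x)"
  unfolding cf_def by (rule theI'[OF ex1[OF assms]])
lemma cf_eq: "x \<in> F n \<Longrightarrow> rep n x c \<Longrightarrow> cf n x = c"
  unfolding cf_def by (rule the1_equality[OF ex1])

lemma cf_props:
  assumes "x \<in> F n"
  shows "cf n x e \<in> A (n - dg e)" "cf n x e \<noteq> 0 \<Longrightarrow> e \<in> E" "finite {e. cf n x e \<noteq> 0}"
    "x = (\<Sum>e\<in>{e. cf n x e \<noteq> 0}. sm (cf n x e) e)"
  using cf_rep[OF assms] unfolding rep_def by auto

lemma cf_low: "x \<in> F n \<Longrightarrow> cf n x e \<noteq> 0 \<Longrightarrow> dg e \<le> n"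
  using cf_props(1)[of x n e] A_neg_deg[of "n - dg e"] by force

lemma rep_unique:
  assumes S: "finite S" "S \<subseteq> E" and c: "\<And>e. e \<in> S \<Longrightarrow> c e \<in> A (n - dg e)"
  shows "(\<Sum>e\<in>S. sm (c e) e) \<in> F n"
    "cf n (\<Sum>e\<in>S. sm (c e) e) e' = (if e' \<in> S then c e' else 0)"
proof -
  have mem: "\<And>e. e \<in> S \<Longrightarrow> sm (c e) e \<in> F n"
    using S c basis_in by (auto intro!: sm_deg)
  show xF: "(\<Sum>e\<in>S. sm (c e) e) \<in> F n" using F_sum[OF S(1) mem] .
  define c' where "c' = (\<lambda>e. if e \<in> S then c e else 0)"
  have set: "{e. c' e \<noteq> 0} = {e\<in>S. c e \<noteq> 0}" unfolding c'_def by auto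
  have "(\<Sum>e\<in>S. sm (c e) e) = (\<Sum>e\<in>{e\<in>S. c e \<noteq> 0}. sm (c e) e)"
    using S by (intro sum.mono_neutral_right) (auto intro!: sm0E)
  also have "\<dots> = (\<Sum>e\<in>{e. c' e \<noteq> 0}. sm (c' e) e)"
    unfolding set by (rule sum.cong) (auto simp: c'_def)
  finally have "rep n (\<Sum>e\<in>S. sm (c e) e) c'"
    unfolding rep_def using S c A0 set by (auto simp: c'_def)
  then have "cf n (\<Sum>e\<in>S. sm (c e) e) = c'" using cf_eq xF by blast
  then show "cf n (\<Sum>e\<in>S. sm (c e) e) e' = (if e' \<in> S then c e' else 0)"
    by (simp add: c'_def)
qed

lemma cf_repU:
  assumes x: "x \<in> F n" and U: "finite U" "U \<subseteq> E" "{e. cf n x e \<noteq> 0} \<subseteq> U"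
  shows "x = (\<Sum>e\<in>U. sm (cf n x e) e)"
proof -
  have "x = (\<Sum>e\<in>{e. cf n x e \<noteq> 0}. sm (cf n x e) e)" using cf_props(4)[OF x] .
  also have "\<dots> = (\<Sum>e\<in>U. sm (cf n x e) e)"
    using U by (intro sum.mono_neutral_left) (auto intro!: sm0E)
  finally show ?thesis .
qed

lemma cf_add:
  assumes x: "x \<in> F n" and y: "y \<in> F n"
  shows "cf n (x + y) e = cf n x e + cf n y e"
proof -
  define U where "U = {e. cf n x e \<noteq> 0} \<union> {e. cf n y e \<noteq> 0}"
  have U: "finite U" "U \<subseteq> E" unfolding U_def using cf_props[OF x] cf_props[OF y] by auto
  have "x + y = (\<Sum>e\<in>U. sm (cf n x e) e) + (\<Sum>e\<in>U. sm (cf n y e) e)"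
    using cf_repU[OF x U] cf_repU[OF y U] unfolding U_def by auto
  also have "\<dots> = (\<Sum>e\<in>U. sm (cf n x e + cf n y e) e)"
    unfolding sum.distrib[symmetric]
    using U cf_props(1)[OF x] cf_props(1)[OF y] by (intro sum.cong refl) (subst sm_addlE; auto)
  finally have "cf n (x + y) e = cf n (\<Sum>e\<in>U. sm (cf n x e + cf n y e) e) e" by simp
  also have "\<dots> = (if e \<in> U then cf n x e + cf n y e else 0)"
    using U cf_props(1)[OF x] cf_props(1)[OF y] by (intro rep_unique) (auto intro: A_add)
  also have "\<dots> = cf n x e + cf n y e" unfolding U_def by auto
  finally show ?thesis .
qed

lemma cf_zero: "cf n 0 e = 0"
  using rep_unique(2)[of "{}" "\<lambda>_. 0" n e] by simp

lemma cf_uminus: "x \<in> F n \<Longrightarrow> cf n (- x) e = - cf n x e"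
  using cf_add[of x n "- x" e] F_uminus cf_zero minus_unique[of "cf n x e" "cf n (- x) e"] by simp

lemma cf_diff: "x \<in> F n \<Longrightarrow> y \<in> F n \<Longrightarrow> cf n (x - y) e = cf n x e - cf n y e"
  using cf_add[of x n "- y" e] F_uminus cf_uminus by simp

lemma cf_sm:
  assumes a: "a \<in> A i" and x: "x \<in> F j" and k: "k = i + j"
  shows "cf k (sm a x) e = a * cf j x e"
proof -
  define S where "S = {e. cf j x e \<noteq> 0}"
  have S: "finite S" "S \<subseteq> E" unfolding S_def using cf_props[OF x] by auto
  have "sm a x = sm a (\<Sum>e\<in>S. sm (cf j x e) e)" using cf_props(4)[OF x] S_def by simp
  also have "\<dots> = (\<Sum>e\<in>S. sm a (sm (cf j x e) e))"
    using S basis_in cf_props(1)[OF x] by (intro sm_sum[OF S(1) a]) (auto intro!: sm_deg)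
  also have "\<dots> = (\<Sum>e\<in>S. sm (a * cf j x e) e)"
    using S cf_props(1)[OF x] a by (intro sum.cong refl) (subst sm_assocE; auto)
  finally have "cf k (sm a x) e = cf k (\<Sum>e\<in>S. sm (a * cf j x e) e) e" by simp
  also have "\<dots> = (if e \<in> S then a * cf j x e else 0)"
    using S cf_props(1)[OF x] a k by (intro rep_unique) (auto intro!: A_mul)
  also have "\<dots> = a * cf j x e" unfolding S_def by auto
  finally show ?thesis .
qed

lemma cf_basis: "e \<in> E \<Longrightarrow> cf (dg e) e e' = (if e' = e then 1 else 0)"
  using rep_unique(2)[of "{e}" "\<lambda>_. 1" "dg e" e'] A1 sm_one[OF basis_in] by auto

lemma cf_sum: "finite S \<Longrightarrow> (\<And>s. s \<in> S \<Longrightarrow> g s \<in> F n) \<Longrightarrow> cf n (sum g S) e = (\<Sum>s\<in>S. cf n (g s) e)"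
proof (induction S rule: finite_induct)
  case empty then show ?case by (simp add: cf_zero)
next
  case (insert x S)
  then show ?case by (simp add: cf_add[OF _ F_sum, of _ n])
qed

end


context sfm begin

lemma cf_dF_top:
  assumes x: "x \<in> F n" and supp: "\<forall>e. cf n x e \<noteq> 0 \<longrightarrow> dg e \<le> m" and e': "m \<le> dg e'"
    and k: "k = n - 1"
  shows "cf k (dF x) e' = d (cf n x e')"
proof -
  define S where "S = {e. cf n x e \<noteq> 0}"
  have S: "finite S" "S \<subseteq> E" using cf_props[OF x] S_def by auto
  have c: "\<And>e. cf n x e \<in> A (n - dg e)" using cf_props(1)[OF x] .
  have trm: "\<And>e. e \<in> S \<Longrightarrow> sm (cf n x e) e \<in> F n" using S c basis_in by (auto intro!: sm_deg)
  have "dF x = dF (\<Sum>e\<in>S. sm (cf n x e) e)" using cf_props(4)[OF x] S_def by simp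
  also have "\<dots> = (\<Sum>e\<in>S. dF (sm (cf n x e) e))" by (rule dF_sum[OF S(1) trm])
  finally have dx: "dF x = (\<Sum>e\<in>S. dF (sm (cf n x e) e))" .
  define t1 where "t1 e = sm (d (cf n x e)) e" for e
  define t2 where "t2 e = (if even (n - dg e) then sm (cf n x e) (dF e) else - sm (cf n x e) (dF e))" for e
  have lei: "\<And>e. e \<in> S \<Longrightarrow> dF (sm (cf n x e) e) = t1 e + t2 e"
    using leib[OF c basis_in] S unfolding t1_def t2_def by auto
  have t1F: "\<And>e. e \<in> S \<Longrightarrow> t1 e \<in> F k"
    unfolding t1_def using S k by (auto intro!: sm_deg[OF d_deg[OF c] basis_in])
  have smF: "\<And>e. e \<in> S \<Longrightarrow> sm (cf n x e) (dF e) \<in> F k"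
    using S k by (auto intro!: sm_deg[OF c dF_deg[OF basis_in]])
  have t2F: "\<And>e. e \<in> S \<Longrightarrow> t2 e \<in> F k"
    unfolding t2_def using smF F_uminus by auto
  have cf1: "cf k (t1 e) e' = (if e' = e then d (cf n x e) else 0)" if eS: "e \<in> S" for e
  proof -
    have "cf k (t1 e) e' = d (cf n x e) * cf (dg e) e e'"
      unfolding t1_def using eS S k by (intro cf_sm[OF d_deg[OF c] basis_in]) auto
    then show ?thesis using cf_basis[of e e'] eS S by auto
  qed
  have cf2: "cf k (t2 e) e' = 0" if eS: "e \<in> S" for e
  proof -
    have eE: "e \<in> E" using eS S by auto
    have dFe: "dF e \<in> F (dg e - 1)" using dF_deg[OF basis_in[OF eE]] by simp
    have z: "cf (dg e - 1) (dF e) e' = 0"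
    proof (rule ccontr)
      assume "cf (dg e - 1) (dF e) e' \<noteq> 0"
      then have "dg e' \<le> dg e - 1" using cf_low[OF dFe] by blast
      moreover have "dg e \<le> m" using supp eS S_def by auto
      ultimately show False using e' by simp
    qed
    have "cf k (sm (cf n x e) (dF e)) e' = cf n x e * cf (dg e - 1) (dF e) e'"
      using k by (intro cf_sm[OF c dFe]) simp
    then have "cf k (sm (cf n x e) (dF e)) e' = 0" using z by simp
    then show ?thesis unfolding t2_def using cf_uminus[OF smF[OF eS]] by auto
  qed
  have "cf k (dF x) e' = (\<Sum>e\<in>S. cf k (dF (sm (cf n x e) e)) e')"
    unfolding dx using S t1F t2F lei by (intro cf_sum) (auto intro!: F_add)
  also have "\<dots> = (\<Sum>e\<in>S. cf k (t1 e) e' + cf k (t2 e) e')"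
    using lei t1F t2F by (intro sum.cong refl) (simp add: cf_add)
  also have "\<dots> = (\<Sum>e\<in>S. if e' = e then d (cf n x e) else 0)"
    using cf1 cf2 by (intro sum.cong refl) simp
  also have "\<dots> = (if e' \<in> S then d (cf n x e') else 0)"
    using S(1) by simp
  also have "\<dots> = d (cf n x e')" using S_def d0 by auto
  finally show ?thesis .
qed

lemma acyc_main:
  assumes Aex: "\<And>j a. s < j \<Longrightarrow> a \<in> A j \<Longrightarrow> d a = 0 \<Longrightarrow> \<exists>b\<in>A (j + 1). d b = a"
    and lb: "\<forall>e\<in>E. lb \<le> dg e"
  shows "\<forall>m z. m < lb + int k \<longrightarrow> m \<le> r \<longrightarrow> s + r < i \<longrightarrow> z \<in> F i \<longrightarrow> dF z = 0 \<longrightarrow>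
          (\<forall>e. cf i z e \<noteq> 0 \<longrightarrow> dg e \<le> m) \<longrightarrow>
          (\<exists>w\<in>F (i + 1). (\<forall>e. cf (i + 1) w e \<noteq> 0 \<longrightarrow> dg e \<le> r) \<and> dF w = z)"
proof (induction k)
  case 0
  show ?case
  proof (intro allI impI)
    fix m z
    assume m: "m < lb + int 0" and z: "z \<in> F i" and supp: "\<forall>e. cf i z e \<noteq> 0 \<longrightarrow> dg e \<le> m"
    have "{e. cf i z e \<noteq> 0} = {}"
      using supp lb cf_props(2)[OF z] m by fastforce
    then have "z = 0" using cf_props(4)[OF z] by simp
    then show "\<exists>w\<in>F (i + 1). (\<forall>e. cf (i + 1) w e \<noteq> 0 \<longrightarrow> dg e \<le> r) \<and> dF w = z"
      using F0 cf_zero dF0 by (intro bexI[of _ 0]) auto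
  qed
next
  case (Suc k)
  show ?case
  proof (intro allI impI)
    fix m z
    assume m: "m < lb + int (Suc k)" and mr: "m \<le> r" and i: "s + r < i" and z: "z \<in> F i"
      and cyc: "dF z = 0" and supp: "\<forall>e. cf i z e \<noteq> 0 \<longrightarrow> dg e \<le> m"
    define T where "T = {e. cf i z e \<noteq> 0 \<and> dg e = m}"
    have T: "finite T" "T \<subseteq> E" using cf_props(2,3)[OF z] unfolding T_def
      by (auto intro: rev_finite_subset)
    have "\<forall>e\<in>T. \<exists>b\<in>A (i - m + 1). d b = cf i z e"
    proof
      fix e assume eT: "e \<in> T"
      have c: "cf i z e \<in> A (i - m)" using cf_props(1)[OF z, of e] eT T_def by simp
      have "d (cf i z e) = cf (i - 1) (dF z) e"
        using cf_dF_top[OF z supp, of e "i - 1"] eT T_def by simp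
      also have "\<dots> = 0" using cyc cf_zero by simp
      finally show "\<exists>b\<in>A (i - m + 1). d b = cf i z e" using Aex[OF _ c] i mr by simp
    qed
    then obtain b where b: "\<And>e. e \<in> T \<Longrightarrow> b e \<in> A (i - m + 1) \<and> d (b e) = cf i z e"
      by metis
    define y where "y = (\<Sum>e\<in>T. sm (b e) e)"
    have bA: "\<And>e. e \<in> T \<Longrightarrow> b e \<in> A (i + 1 - dg e)" using b T_def by (auto simp: algebra_simps)
    have yF: "y \<in> F (i + 1)" unfolding y_def using rep_unique(1)[OF T bA] .
    have cfy: "\<And>e. cf (i + 1) y e = (if e \<in> T then b e else 0)"
      unfolding y_def using rep_unique(2)[OF T bA] .
    have suppy: "\<forall>e. cf (i + 1) y e \<noteq> 0 \<longrightarrow> dg e \<le> m" using cfy T_def by auto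
    have dyF: "dF y \<in> F i" using dF_deg[OF yF] by simp
    define z' where "z' = z - dF y"
    have z'F: "z' \<in> F i" unfolding z'_def using F_diff[OF z dyF] .
    have cfdy: "\<And>e. m \<le> dg e \<Longrightarrow> cf i (dF y) e = d (cf (i + 1) y e)"
      using cf_dF_top[OF yF suppy] by simp
    have supp': "\<forall>e. cf i z' e \<noteq> 0 \<longrightarrow> dg e \<le> m - 1"
    proof (intro allI impI)
      fix e assume ne: "cf i z' e \<noteq> 0"
      show "dg e \<le> m - 1"
      proof (rule ccontr)
        assume "\<not> dg e \<le> m - 1"
        then have me: "m \<le> dg e" by simp
        have eq: "cf i z' e = cf i z e - d (cf (i + 1) y e)"
          unfolding z'_def using cf_diff[OF z dyF] cfdy[OF me] by simp
        have "cf i z' e = 0"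
        proof (cases "e \<in> T")
          case True then show ?thesis using eq cfy b by simp
        next
          case False
          then have "cf i z e = 0" using supp me T_def by force
          then show ?thesis using eq cfy False d0 by simp
        qed
        then show False using ne by simp
      qed
    qed
    have cyc': "dF z' = 0" unfolding z'_def using dF_diff[OF z dyF] cyc dFdF[OF yF] by simp
    obtain w' where w': "w' \<in> F (i + 1)" "\<forall>e. cf (i + 1) w' e \<noteq> 0 \<longrightarrow> dg e \<le> r" "dF w' = z'"
      using Suc.IH[rule_format, of "m - 1" z'] m mr i z'F cyc' supp' by auto
    show "\<exists>w\<in>F (i + 1). (\<forall>e. cf (i + 1) w e \<noteq> 0 \<longrightarrow> dg e \<le> r) \<and> dF w = z"
    proof (intro bexI[of _ "y + w'"] conjI allI impI)
      show "y + w' \<in> F (i + 1)" using F_add[OF yF w'(1)] .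
      show "dF (y + w') = z" using dF_add[OF yF w'(1)] w'(3) unfolding z'_def by simp
      fix e assume "cf (i + 1) (y + w') e \<noteq> 0"
      then have "cf (i + 1) y e \<noteq> 0 \<or> cf (i + 1) w' e \<noteq> 0" using cf_add[OF yF w'(1)] by auto
      then show "dg e \<le> r" using suppy w'(2) mr by force
    qed
  qed
qed

lemma low_iff: "x \<in> low_part A sm E dg r n \<longleftrightarrow> x \<in> F n \<and> (\<forall>e. cf n x e \<noteq> 0 \<longrightarrow> dg e \<le> r)"
proof
  assume "x \<in> low_part A sm E dg r n"
  then obtain S c where S: "finite S" "S \<subseteq> {e\<in>E. dg e \<le> r}" "\<forall>e\<in>S. c e \<in> A (n - dg e)"
    and x: "x = (\<Sum>e\<in>S. sm (c e) e)" unfolding low_part_def by blast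
  have S': "finite S" "S \<subseteq> E" using S by auto
  show "x \<in> F n \<and> (\<forall>e. cf n x e \<noteq> 0 \<longrightarrow> dg e \<le> r)"
    using rep_unique[OF S', of c n] S x by auto
next
  assume a: "x \<in> F n \<and> (\<forall>e. cf n x e \<noteq> 0 \<longrightarrow> dg e \<le> r)"
  then have x: "x \<in> F n" by simp
  show "x \<in> low_part A sm E dg r n"
    unfolding low_part_def
    using cf_props[OF x] a by (intro CollectI exI[of _ "{e. cf n x e \<noteq> 0}"] exI[of _ "cf n x"]) auto
qed

end



theorem lemma4p3:
  fixes A :: "int \<Rightarrow> 'a::ring_1 set" and d :: "'a \<Rightarrow> 'a"
    and K :: "int \<Rightarrow> 'k::ab_group_add set" and dK :: "'k \<Rightarrow> 'k" and smK :: "'a \<Rightarrow> 'k \<Rightarrow> 'k"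
    and F :: "int \<Rightarrow> 'f::ab_group_add set" and dF :: "'f \<Rightarrow> 'f" and smF :: "'a \<Rightarrow> 'f \<Rightarrow> 'f"
    and E :: "'f set" and dg :: "'f \<Rightarrow> int" and \<phi> :: "'f \<Rightarrow> 'k"
    and s r :: int
  assumes A_local: "local_dg_algebra A d"
    and A_bounded: "finite (hom_degrees A d)"
    and A_nonzero: "hom_degrees A d \<noteq> {}"
    and s_def: "s = Max (hom_degrees A d) - Min (hom_degrees A d)"
    and K_mod: "dg_module A d K dK smK"
    and K_fin: "homologically_finite A K dK smK"
    and K_amp: "\<forall>i\<in>hom_degrees K dK. \<forall>j\<in>hom_degrees K dK. i - j \<le> s"
    and r_ge: "\<forall>i\<in>hom_degrees K dK. i \<le> r"
    and F_mod: "dg_module A d F dF smF"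
    and F_min: "minimal_semifree A F dF smF E dg"
    and F_res: "quasi_iso A F dF smF K dK smK \<phi>"
  shows "(\<forall>i\<in>hom_degrees (syzygy A F dF smF E dg r) dF. i \<le> s + r) \<and>
         (\<forall>i\<in>hom_degrees (syzygy A F dF smF E dg r) dF. r \<le> i) \<and>
         (\<forall>i\<in>hom_degrees (syzygy A F dF smF E dg r) dF.
            \<forall>j\<in>hom_degrees (syzygy A F dF smF E dg r) dF. i - j \<le> s)"
proof -
  have dga: "dg_algebra A d" and pos: "positively_graded A"
    and lnr: "local_noetherian_ring (H0_ring A d)"
    using A_local unfolding local_dg_algebra_def by auto
  have sbasis: "semibasis A F smF E dg" using F_min unfolding minimal_semifree_def by blast
  obtain lb where lb: "\<forall>e\<in>E. lb \<le> dg e" using F_min unfolding minimal_semifree_def by blast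
  interpret S: sfm A d F dF smF E dg using dga pos F_mod sbasis by unfold_locales
  let ?H = "hom_degrees A d"
  have zH: "0 \<in> ?H" using H0_nonzero[OF dga pos lnr] .
  have Hge: "\<forall>j\<in>?H. 0 \<le> j"
  proof
    fix j assume jH: "j \<in> ?H"
    show "0 \<le> j"
    proof (rule ccontr)
      assume "\<not> 0 \<le> j"
      then have j: "j < 0" by simp
      have "cycles A d j \<subseteq> {0}" using S.A_neg_deg[OF j] unfolding cycles_def by auto
      moreover have "0 \<in> boundaries A d j" unfolding boundaries_def using S.A0 S.d0 by force
      ultimately show False using jH unfolding hom_degrees_def homology_nonzero_def by auto
    qed
  qed
  have Min0: "Min ?H = 0"
    using zH Hge A_bounded by (meson Min_in Min_le A_nonzero antisym)
  have s_eq: "s = Max ?H" using s_def Min0 by simp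
  have s0: "0 \<le> s" using s_eq zH A_bounded by (simp add: Max_ge)
  have Aex: "\<And>j a. s < j \<Longrightarrow> a \<in> A j \<Longrightarrow> d a = 0 \<Longrightarrow> \<exists>b\<in>A (j + 1). d b = a"
  proof -
    fix j a assume j: "s < j" and a: "a \<in> A j" and da: "d a = 0"
    have "j \<notin> ?H" using j s_eq A_bounded Max_ge by fastforce
    then have "cycles A d j \<subseteq> boundaries A d j" unfolding hom_degrees_def homology_nonzero_def by simp
    moreover have "a \<in> cycles A d j" using a da unfolding cycles_def by simp
    ultimately show "\<exists>b\<in>A (j + 1). d b = a" unfolding boundaries_def by auto
  qed
  let ?Sy = "syzygy A F dF smF E dg r"
  have up: "\<forall>i\<in>hom_degrees ?Sy dF. i \<le> s + r"
  proof
    fix i assume iH: "i \<in> hom_degrees ?Sy dF"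
    show "i \<le> s + r"
    proof (rule ccontr)
      assume "\<not> i \<le> s + r"
      then have i: "s + r < i" by simp
      obtain x where xc: "x \<in> cycles ?Sy dF i" and xnb: "x \<notin> boundaries ?Sy dF i"
        using iH unfolding hom_degrees_def homology_nonzero_def by auto
      have xl: "x \<in> low_part A smF E dg r i" and dx: "dF x = 0"
        using xc unfolding cycles_def syzygy_def by auto
      have xF: "x \<in> F i" and xs: "\<forall>e. S.cf i x e \<noteq> 0 \<longrightarrow> dg e \<le> r"
        using xl S.low_iff by auto
      define k where "k = nat (r - lb + 1)"
      have "r < lb + int k" unfolding k_def by simp
      then obtain w where w: "w \<in> F (i + 1)" "\<forall>e. S.cf (i + 1) w e \<noteq> 0 \<longrightarrow> dg e \<le> r" "dF w = x"
        using S.acyc_main[OF Aex lb, where k=k and r=r and i=i, rule_format, where m=r and z=x] i xF dx xs by auto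
      have "w \<in> ?Sy (i + 1)"
        unfolding syzygy_def trunc_proj_zero_def using w S.low_iff i s0 by auto
      then have "x \<in> boundaries ?Sy dF i" unfolding boundaries_def using w(3) by auto
      then show False using xnb by simp
    qed
  qed
  have low: "\<forall>i\<in>hom_degrees ?Sy dF. r \<le> i"
  proof
    fix i assume iH: "i \<in> hom_degrees ?Sy dF"
    show "r \<le> i"
    proof (rule ccontr)
      assume "\<not> r \<le> i"
      then have i: "i < r" by simp
      have "cycles ?Sy dF i \<subseteq> {0}" unfolding cycles_def syzygy_def trunc_proj_zero_def using i by auto
      moreover have "0 \<in> ?Sy (i + 1)"
      proof -
        have "0 \<in> low_part A smF E dg r (i + 1)" unfolding low_part_def
          by (intro CollectI exI[of _ "{}"]) simp
        moreover have "trunc_proj_zero F dF r (i + 1) 0"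
          unfolding trunc_proj_zero_def using S.F0 S.dF0 by force
        ultimately show ?thesis unfolding syzygy_def by simp
      qed
      then have "0 \<in> boundaries ?Sy dF i" unfolding boundaries_def using S.dF0 by force
      ultimately show False using iH unfolding hom_degrees_def homology_nonzero_def by auto
    qed
  qed
  show ?thesis using up low by fastforce
qed


end
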